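(* There exist constants $c(\beta)>0$ depending only on the integer $\beta\ge0$, and absolute constants $c_1,c_2,c_3,c_4>0$, such that for all $d\ge1$, $n\ge3$, $j\in\{1,\dots,d\}$, $h,s>0$, the following hold for $\boldsymbol X_1,\dots,\boldsymbol X_n$ i.i.d. from $p_\pi$: (1) if $\pi$ is supported on $[0,h]^d$, then $\mathbb E\big[(1+X_{j,\max})^\beta\prod_{k\ne j}(1+X_{k,\max})\big]\le c(\beta)\big(\max\{c_1,c_2h\}\frac{\log n}{\log\log n}\big)^{d-1+\beta}$; (2) if $\pi$ is supported on $[0,s\log n]^d$, then $\mathbb E\big[(1+X_{j,\max})^\beta\prod_{k\ne j}(1+X_{k,\max})\big]\le c(\beta)\big(\max\{c_3,c_4s\}\log n\big)^{d-1+\beta}$.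
   Context: Multidimensional Poisson mixture: $\boldsymbol\theta\sim\pi$ on $\mathbb R_+^d$, and given $\boldsymbol\theta$ the coordinates $X_k\sim\mathrm{Poi}(\theta_k)$ are independent; $p_\pi$ is the law of $\boldsymbol X$. $X_{k,\max}=\max_{1\le i\le n}X_{ik}$. *)

theory Defs
  imports "HOL-Probability.Probability"
begin

text \<open>Poisson probability mass function with mean theta >= 0 (theta = 0 gives the point mass at 0).\<close>
definition poi_pmf :: "real \<Rightarrow> nat \<Rightarrow> real" where
  "poi_pmf \<theta> k = \<theta> ^ k / fact k * exp (- \<theta>)"

text \<open>The multidimensional Poisson mixture p_pi on N^d: coordinates indexed by {..<d};
  pi is a measure on theta vectors (nat => real, product Borel sigma algebra on {..<d}).\<close>
definition pois_mixture :: "nat \<Rightarrow> (nat \<Rightarrow> real) measure \<Rightarrow> (nat \<Rightarrow> nat) measure" where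
  "pois_mixture d \<pi> =
     density (PiM {..<d} (\<lambda>_. count_space UNIV))
       (\<lambda>x. \<integral>\<^sup>+ \<theta>. ennreal (\<Prod>k<d. poi_pmf (\<theta> k) (x k)) \<partial>\<pi>)"

definition Xmax :: "nat \<Rightarrow> (nat \<Rightarrow> nat \<Rightarrow> nat) \<Rightarrow> nat \<Rightarrow> nat" where
  "Xmax n xs k = Max ((\<lambda>i. xs i k) ` {..<n})"

definition moment_max :: "nat \<Rightarrow> (nat \<Rightarrow> real) measure \<Rightarrow> nat \<Rightarrow> nat \<Rightarrow> nat \<Rightarrow> ennreal" where
  "moment_max d \<pi> n j \<beta> =
     (\<integral>\<^sup>+ xs. ennreal ((1 + real (Xmax n xs j)) ^ \<beta> *
                         (\<Prod>k\<in>{..<d} - {j}. (1 + real (Xmax n xs k))))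
       \<partial>(PiM {..<n} (\<lambda>_. pois_mixture d \<pi>)))"

end

theory Submission
  imports Defs
begin


lemma meas_joint:
  fixes \<pi> :: "(nat \<Rightarrow> real) measure" and u :: "nat \<Rightarrow> nat \<Rightarrow> real"
  assumes S: "sets \<pi> = sets (PiM {..<d} (\<lambda>_. borel))"
  shows "(\<lambda>(x,\<theta>). \<Prod>k<d. ennreal (poi_pmf (\<theta> k) (x k) * u k (x k)))
     \<in> borel_measurable (PiM {..<d} (\<lambda>_. count_space UNIV) \<Otimes>\<^sub>M \<pi>)"
proof -
  have "(\<lambda>p. \<Prod>k<d. ennreal (poi_pmf (snd p k) (fst p k) * u k (fst p k)))
     \<in> borel_measurable (PiM {..<d} (\<lambda>_. count_space UNIV) \<Otimes>\<^sub>M \<pi>)"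
  proof (rule borel_measurable_prod_ennreal)
    fix k assume k: "k \<in> {..<d}"
    have th: "(\<lambda>p. snd p k) \<in> borel_measurable (PiM {..<d} (\<lambda>_. count_space UNIV) \<Otimes>\<^sub>M \<pi>)"
    proof -
      have "(\<lambda>\<theta>. \<theta> k) \<in> borel_measurable \<pi>"
        using k by (subst measurable_cong_sets[OF S refl]) auto
      then show ?thesis by (rule measurable_compose[OF measurable_snd])
    qed
    have x: "(\<lambda>p. fst p k) \<in> measurable (PiM {..<d} (\<lambda>_. count_space UNIV) \<Otimes>\<^sub>M \<pi>) (count_space UNIV)"
      using k by measurable
    show "(\<lambda>p. ennreal (poi_pmf (snd p k) (fst p k) * u k (fst p k)))
     \<in> borel_measurable (PiM {..<d} (\<lambda>_. count_space UNIV) \<Otimes>\<^sub>M \<pi>)"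
      apply (rule measurable_compose_countable[where g="\<lambda>p. fst p k" and f="\<lambda>i p. ennreal (poi_pmf (snd p k) i * u k i)", OF _ x])
      unfolding poi_pmf_def using th by measurable
  qed
  then show ?thesis by (simp add: case_prod_beta')
qed


lemma meas_joint2:
  fixes \<pi> :: "(nat \<Rightarrow> real) measure"
  assumes S: "sets \<pi> = sets (PiM {..<d} (\<lambda>_. borel))"
  shows "(\<lambda>(x,\<theta>). ennreal (\<Prod>k<d. poi_pmf (\<theta> k) (x k)))
     \<in> borel_measurable (PiM {..<d} (\<lambda>_. count_space UNIV) \<Otimes>\<^sub>M \<pi>)"
proof -
  have "(\<lambda>p. (\<Prod>k<d. poi_pmf (snd p k) (fst p k)))
     \<in> borel_measurable (PiM {..<d} (\<lambda>_. count_space UNIV) \<Otimes>\<^sub>M \<pi>)"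
  proof (rule borel_measurable_prod)
    fix k assume k: "k \<in> {..<d}"
    have th: "(\<lambda>p. snd p k) \<in> borel_measurable (PiM {..<d} (\<lambda>_. count_space UNIV) \<Otimes>\<^sub>M \<pi>)"
    proof -
      have "(\<lambda>\<theta>. \<theta> k) \<in> borel_measurable \<pi>"
        using k by (subst measurable_cong_sets[OF S refl]) auto
      then show ?thesis by (rule measurable_compose[OF measurable_snd])
    qed
    have x: "(\<lambda>p. fst p k) \<in> measurable (PiM {..<d} (\<lambda>_. count_space UNIV) \<Otimes>\<^sub>M \<pi>) (count_space UNIV)"
      using k by measurable
    show "(\<lambda>p. poi_pmf (snd p k) (fst p k))
     \<in> borel_measurable (PiM {..<d} (\<lambda>_. count_space UNIV) \<Otimes>\<^sub>M \<pi>)"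
      apply (rule measurable_compose_countable[where g="\<lambda>p. fst p k" and f="\<lambda>i p. poi_pmf (snd p k) i", OF _ x])
      unfolding poi_pmf_def using th by measurable
  qed
  then show ?thesis by (simp add: case_prod_beta')
qed




abbreviation NN :: "nat \<Rightarrow> (nat \<Rightarrow> nat) measure" where
  "NN d \<equiv> PiM {..<d} (\<lambda>_. count_space UNIV)"

lemma sf_NN: "sigma_finite_measure (NN d)"
proof -
  interpret product_sigma_finite "\<lambda>_::nat. count_space (UNIV::nat set)"
    by (simp add: product_sigma_finite_def sigma_finite_measure_count_space)
  interpret finite_product_sigma_finite "\<lambda>_::nat. count_space (UNIV::nat set)" "{..<d}"
    by standard auto
  show ?thesis by (rule sigma_finite_measure_axioms)
qed

lemma NN_prod:
  fixes g :: "nat \<Rightarrow> nat \<Rightarrow> ennreal"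
  shows "(\<integral>\<^sup>+x. (\<Prod>k<d. g k (x k)) \<partial>NN d) = (\<Prod>k<d. \<integral>\<^sup>+t. g k t \<partial>count_space UNIV)"
proof -
  interpret product_sigma_finite "\<lambda>_::nat. count_space (UNIV::nat set)"
    by (simp add: product_sigma_finite_def sigma_finite_measure_count_space)
  show ?thesis by (rule product_nn_integral_prod) auto
qed

lemma meas_U:
  "(\<lambda>x. \<Prod>k<d. ennreal (u k (x k))) \<in> borel_measurable (NN d)"
  by (rule borel_measurable_prod_ennreal) measurable

lemma L1:
  fixes \<pi> :: "(nat \<Rightarrow> real) measure" and u :: "nat \<Rightarrow> nat \<Rightarrow> real"
  assumes S: "sets \<pi> = sets (PiM {..<d} (\<lambda>_. borel))" and P: "prob_space \<pi>"
    and u: "\<And>k t. 0 \<le> u k t" and pos: "AE \<theta> in \<pi>. \<forall>k<d. 0 \<le> \<theta> k"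
  shows "(\<integral>\<^sup>+x. (\<Prod>k<d. ennreal (u k (x k))) \<partial>pois_mixture d \<pi>) =
    (\<integral>\<^sup>+\<theta>. (\<Prod>k<d. \<integral>\<^sup>+t. ennreal (poi_pmf (\<theta> k) t * u k t) \<partial>count_space UNIV) \<partial>\<pi>)"
proof -
  interpret prob_space \<pi> by (rule P)
  have fm: "(\<lambda>x. \<integral>\<^sup>+\<theta>. ennreal (\<Prod>k<d. poi_pmf (\<theta> k) (x k)) \<partial>\<pi>) \<in> borel_measurable (NN d)"
    by (rule borel_measurable_nn_integral[OF meas_joint2[OF S]])
  interpret N: sigma_finite_measure "NN d" by (rule sf_NN)
  interpret pair_sigma_finite "NN d" \<pi> by standard
  have "(\<integral>\<^sup>+x. (\<Prod>k<d. ennreal (u k (x k))) \<partial>pois_mixture d \<pi>) =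
     (\<integral>\<^sup>+x. (\<integral>\<^sup>+\<theta>. ennreal (\<Prod>k<d. poi_pmf (\<theta> k) (x k)) \<partial>\<pi>) * (\<Prod>k<d. ennreal (u k (x k))) \<partial>NN d)"
    unfolding pois_mixture_def by (rule nn_integral_density[OF fm meas_U])
  also have "\<dots> = (\<integral>\<^sup>+x. (\<integral>\<^sup>+\<theta>. (\<Prod>k<d. ennreal (poi_pmf (\<theta> k) (x k) * u k (x k))) \<partial>\<pi>) \<partial>NN d)"
  proof (rule nn_integral_cong)
    fix x :: "nat \<Rightarrow> nat" assume xs: "x \<in> space (NN d)"
    have mx: "(\<lambda>\<theta>. ennreal (\<Prod>k<d. poi_pmf (\<theta> k) (x k))) \<in> borel_measurable \<pi>"
      using measurable_Pair2[OF meas_joint2[OF S], of x] xs by simp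
    have "(\<integral>\<^sup>+\<theta>. ennreal (\<Prod>k<d. poi_pmf (\<theta> k) (x k)) \<partial>\<pi>) * (\<Prod>k<d. ennreal (u k (x k)))
       = (\<integral>\<^sup>+\<theta>. ennreal (\<Prod>k<d. poi_pmf (\<theta> k) (x k)) * (\<Prod>k<d. ennreal (u k (x k))) \<partial>\<pi>)"
      by (rule nn_integral_multc[OF mx, symmetric])
    also have "\<dots> = (\<integral>\<^sup>+\<theta>. (\<Prod>k<d. ennreal (poi_pmf (\<theta> k) (x k) * u k (x k))) \<partial>\<pi>)"
    proof (rule nn_integral_cong_AE)
      show "AE \<theta> in \<pi>. ennreal (\<Prod>k<d. poi_pmf (\<theta> k) (x k)) * (\<Prod>k<d. ennreal (u k (x k))) =
          (\<Prod>k<d. ennreal (poi_pmf (\<theta> k) (x k) * u k (x k)))"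
        using pos
      proof eventually_elim
        case (elim \<theta>)
        have p: "\<And>k. k < d \<Longrightarrow> 0 \<le> poi_pmf (\<theta> k) (x k)"
          using elim unfolding poi_pmf_def by auto
        have "ennreal (\<Prod>k<d. poi_pmf (\<theta> k) (x k)) * (\<Prod>k<d. ennreal (u k (x k)))
            = ennreal (\<Prod>k<d. poi_pmf (\<theta> k) (x k)) * ennreal (\<Prod>k<d. u k (x k))"
          using u by (simp add: prod_ennreal)
        also have "\<dots> = ennreal (\<Prod>k<d. poi_pmf (\<theta> k) (x k) * u k (x k))"
          using p u by (simp add: ennreal_mult'' prod_nonneg prod.distrib)
        also have "\<dots> = (\<Prod>k<d. ennreal (poi_pmf (\<theta> k) (x k) * u k (x k)))"
          by (rule prod_ennreal[symmetric]) (use p u in auto)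
        finally show ?case .
      qed
    qed
    finally show "(\<integral>\<^sup>+\<theta>. ennreal (\<Prod>k<d. poi_pmf (\<theta> k) (x k)) \<partial>\<pi>) * (\<Prod>k<d. ennreal (u k (x k)))
       = (\<integral>\<^sup>+\<theta>. (\<Prod>k<d. ennreal (poi_pmf (\<theta> k) (x k) * u k (x k))) \<partial>\<pi>)" .
  qed
  also have "\<dots> = (\<integral>\<^sup>+\<theta>. (\<integral>\<^sup>+x. (\<Prod>k<d. ennreal (poi_pmf (\<theta> k) (x k) * u k (x k))) \<partial>NN d) \<partial>\<pi>)"
    by (rule Fubini'[symmetric]) (rule meas_joint[OF S])
  also have "\<dots> = (\<integral>\<^sup>+\<theta>. (\<Prod>k<d. \<integral>\<^sup>+t. ennreal (poi_pmf (\<theta> k) t * u k t) \<partial>count_space UNIV) \<partial>\<pi>)"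
    by (rule nn_integral_cong) (rule NN_prod[where g="\<lambda>k t. ennreal (poi_pmf (_ k) t * u k t)"])
  finally show ?thesis .
qed




lemma E_bound: "0 \<le> (x::real) \<Longrightarrow> x ^ n / fact n \<le> exp x"
proof -
  assume x: "0 \<le> x"
  have s: "(\<lambda>i. x ^ i / fact i) sums exp x"
    using exp_converges[of x] by (simp add: divide_inverse mult.commute scaleR_conv_of_real)
  have "x ^ n / fact n \<le> (\<Sum>i<Suc n. x ^ i / fact i)"
    using x by (simp add: sum_nonneg)
  also have "\<dots> \<le> exp x"
    using sum_le_suminf[OF sums_summable[OF s], of "{..<Suc n}"] x sums_unique[OF s]
    by (simp add: divide_nonneg_nonneg)
  finally show ?thesis .
qed

lemma poi_nonneg: "0 \<le> \<theta> \<Longrightarrow> 0 \<le> poi_pmf \<theta> t"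
  unfolding poi_pmf_def by simp

lemma poi_sums: "(\<lambda>t. poi_pmf \<theta> t) sums 1"
proof -
  have s: "(\<lambda>i. \<theta> ^ i / fact i) sums exp \<theta>"
    using exp_converges[of \<theta>] by (simp add: divide_inverse mult.commute scaleR_conv_of_real)
  have "(\<lambda>i. \<theta> ^ i / fact i * exp (-\<theta>)) sums (exp \<theta> * exp (-\<theta>))"
    by (rule sums_mult2[OF s])
  then show ?thesis unfolding poi_pmf_def by (simp add: exp_minus)
qed

lemma Lu: "0 \<le> \<theta> \<Longrightarrow> (\<integral>\<^sup>+t. ennreal (poi_pmf \<theta> t * 1) \<partial>count_space UNIV) = 1"
  by (simp add: nn_integral_count_space_nat suminf_ennreal2 poi_nonneg sums_summable[OF poi_sums]
      sums_unique[OF poi_sums, symmetric])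

lemma ptw:
  fixes h T \<theta> :: real
  assumes th: "0 \<le> \<theta>" "\<theta> \<le> h" and h: "0 < h" and T: "1 \<le> T" "2 * exp 2 * h \<le> T"
  shows "poi_pmf \<theta> t * ((1 + real t) ^ a * (if T \<le> real t then 1 else 0))
     \<le> fact a * exp 1 * (2 * exp 2 * h / T) powr T * (1/2) ^ t"
proof (cases "T \<le> real t")
  case False
  then show ?thesis by simp
next
  case True
  have t1: "1 \<le> real t" using True T by linarith
  have A: "(1 + real t) ^ a \<le> fact a * exp (1 + real t)"
    using E_bound[of "1 + real t" a] by (simp add: field_simps)
  have B: "poi_pmf \<theta> t \<le> h ^ t / fact t"
  proof -
    have "\<theta> ^ t \<le> h ^ t" using th by (simp add: power_mono)
    moreover have "exp (-\<theta>) \<le> 1" using th by simp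
    ultimately have "\<theta> ^ t * exp (-\<theta>) \<le> h ^ t * 1"
      using th by (intro mult_mono) auto
    then show ?thesis unfolding poi_pmf_def by (simp add: divide_right_mono field_simps)
  qed
  have C: "real t ^ t / fact t \<le> exp (real t)" by (rule E_bound) simp
  have r: "0 < 2 * exp 2 * h / T" using h T by simp
  have r1: "2 * exp 2 * h / T \<le> 1" using T by simp
  have "poi_pmf \<theta> t * ((1 + real t) ^ a * (if T \<le> real t then 1 else 0))
      = poi_pmf \<theta> t * (1 + real t) ^ a" using True by simp
  also have "\<dots> \<le> (h ^ t / fact t) * (fact a * exp (1 + real t))"
    using A B th by (intro mult_mono) (auto simp: poi_nonneg)
  also have "\<dots> = fact a * exp 1 * ((exp 1 * h / real t) ^ t * (real t ^ t / fact t))"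
    using t1 by (simp add: exp_add power_divide power_mult_distrib exp_of_nat_mult[symmetric] field_simps)
  also have "\<dots> \<le> fact a * exp 1 * ((exp 1 * h / real t) ^ t * exp (real t))"
    using C h t1 by (intro mult_left_mono) auto
  also have "(exp 1 * h / real t) ^ t * exp (real t) = (2 * exp 2 * h / real t) ^ t * (1/2) ^ t"
  proof -
    have "(exp 1 * h / real t) ^ t * exp (real t) = (exp 1 * h / real t * exp 1) ^ t"
    proof -
      have "exp (real t) = exp 1 ^ t" using exp_of_nat_mult[of t 1] by simp
      then show ?thesis by (simp add: power_mult_distrib[symmetric] mult.commute mult.left_commute)
    qed
    also have "exp 1 * h / real t * exp 1 = (2 * exp 2 * h / real t) * (1/2)"
      by (simp add: exp_add[of 1 1, simplified] field_simps)
    finally show ?thesis by (metis power_mult_distrib)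
  qed
  also have "fact a * exp 1 * ((2 * exp 2 * h / real t) ^ t * (1/2) ^ t)
     \<le> fact a * exp 1 * ((2 * exp 2 * h / T) ^ t * (1/2) ^ t)"
    using True h T by (intro mult_left_mono mult_right_mono power_mono divide_left_mono) auto
  also have "(2 * exp 2 * h / T) ^ t = (2 * exp 2 * h / T) powr (real t)"
    using r by (simp add: powr_realpow)
  also have "fact a * exp 1 * ((2 * exp 2 * h / T) powr (real t) * (1/2) ^ t)
     \<le> fact a * exp 1 * ((2 * exp 2 * h / T) powr T * (1/2) ^ t)"
    using True r r1 by (intro mult_left_mono mult_right_mono powr_mono') auto
  finally show ?thesis by simp
qed

lemma Lg:
  fixes h T \<theta> :: real
  assumes th: "0 \<le> \<theta>" "\<theta> \<le> h" and h: "0 < h" and T: "1 \<le> T" "2 * exp 2 * h \<le> T"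
  shows "(\<integral>\<^sup>+t. ennreal (poi_pmf \<theta> t * ((1 + real t) ^ a * (if T \<le> real t then 1 else 0))) \<partial>count_space UNIV)
     \<le> ennreal (2 * (fact a * exp 1 * (2 * exp 2 * h / T) powr T))"
proof -
  define C where "C = fact a * exp 1 * (2 * exp 2 * h / T) powr T"
  have C0: "0 \<le> C" unfolding C_def by simp
  have g: "(\<lambda>t::nat. (1/2::real) ^ t) sums 2"
    using geometric_sums[of "1/2::real"] by simp
  have "(\<integral>\<^sup>+t. ennreal (poi_pmf \<theta> t * ((1 + real t) ^ a * (if T \<le> real t then 1 else 0))) \<partial>count_space UNIV)
     \<le> (\<integral>\<^sup>+t. ennreal (C * (1/2) ^ t) \<partial>count_space UNIV)"
    by (intro nn_integral_mono ennreal_leI) (use ptw[OF th h T] in \<open>simp add: C_def\<close>)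
  also have "\<dots> = ennreal (\<Sum>t. C * (1/2) ^ t)"
    using C0 by (simp add: nn_integral_count_space_nat suminf_ennreal2 summable_mult sums_summable[OF g])
  also have "(\<Sum>t. C * (1/2::real) ^ t) = 2 * C"
    using sums_unique[OF sums_mult[OF g, of C]] by simp
  finally show ?thesis by (simp add: C_def)
qed



lemma prod_mono_ennreal:
  fixes f g :: "'a \<Rightarrow> ennreal"
  shows "(\<And>i. i \<in> A \<Longrightarrow> f i \<le> g i) \<Longrightarrow> prod f A \<le> prod g A"
proof (induction A rule: infinite_finite_induct)
  case (insert x F)
  then show ?case by (simp add: mult_mono)
qed auto

lemma prod_opt:
  fixes z :: "nat \<Rightarrow> 'a::comm_monoid_mult"
  assumes "c \<in> insert None (Some ` {..<n})"
  shows "(\<Prod>i<n. if c = Some i then z i else 1) = (case c of None \<Rightarrow> 1 | Some i \<Rightarrow> z i)"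
  using assms by (cases c) auto

lemma swap_opt:
  fixes z :: "nat \<Rightarrow> nat \<Rightarrow> 'a::comm_monoid_mult"
  assumes "f \<in> PiE {..<d} (\<lambda>_. insert None (Some ` {..<n}))"
  shows "(\<Prod>i<n. \<Prod>k<d. if f k = Some i then z k i else 1) =
         (\<Prod>k<d. case f k of None \<Rightarrow> 1 | Some i \<Rightarrow> z k i)"
proof -
  have "(\<Prod>i<n. \<Prod>k<d. if f k = Some i then z k i else 1) = (\<Prod>k<d. \<Prod>i<n. if f k = Some i then z k i else 1)"
    by (rule prod.swap)
  also have "\<dots> = (\<Prod>k<d. case f k of None \<Rightarrow> 1 | Some i \<Rightarrow> z k i)"
    by (rule prod.cong[OF refl], rule prod_opt) (use assms in auto)
  finally show ?thesis .
qed

lemma sum_opt: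
  fixes z :: "nat option \<Rightarrow> 'a::comm_monoid_add"
  shows "(\<Sum>c\<in>insert None (Some ` {..<n}). z c) = z None + (\<Sum>i<n. z (Some i))"
  by (simp add: sum.reindex)




lemma P_prob:
  fixes \<pi> :: "(nat \<Rightarrow> real) measure"
  assumes S: "sets \<pi> = sets (PiM {..<d} (\<lambda>_. borel))" and P: "prob_space \<pi>"
    and pos: "AE \<theta> in \<pi>. \<forall>k<d. 0 \<le> \<theta> k"
  shows "prob_space (pois_mixture d \<pi>)"
proof
  interpret prob_space \<pi> by (rule P)
  have "emeasure (pois_mixture d \<pi>) (space (pois_mixture d \<pi>)) = (\<integral>\<^sup>+x. 1 \<partial>pois_mixture d \<pi>)"
    by (simp add: nn_integral_const)
  also have "\<dots> = (\<integral>\<^sup>+x. (\<Prod>k<d. ennreal ((\<lambda>_ _. 1::real) k (x k))) \<partial>pois_mixture d \<pi>)"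
    by simp
  also have "\<dots> = (\<integral>\<^sup>+\<theta>. (\<Prod>k<d. \<integral>\<^sup>+t. ennreal (poi_pmf (\<theta> k) t * 1) \<partial>count_space UNIV) \<partial>\<pi>)"
    by (rule L1[OF S P _ pos]) simp
  also have "\<dots> = (\<integral>\<^sup>+\<theta>. 1 \<partial>\<pi>)"
  proof (rule nn_integral_cong_AE)
    show "AE \<theta> in \<pi>. (\<Prod>k<d. \<integral>\<^sup>+t. ennreal (poi_pmf (\<theta> k) t * 1) \<partial>count_space UNIV) = 1"
      using pos
    proof eventually_elim
      case (elim \<theta>)
      show ?case by (rule prod.neutral) (use elim Lu in blast)
    qed
  qed
  also have "\<dots> = 1" by (simp add: emeasure_space_1)
  finally show "emeasure (pois_mixture d \<pi>) (space (pois_mixture d \<pi>)) = 1" .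
qed




lemma GEN:
  fixes \<pi> :: "(nat \<Rightarrow> real) measure" and h T :: real
  assumes d: "1 \<le> d" and n: "1 \<le> n" and j: "j < d" and P: "prob_space \<pi>"
    and S: "sets \<pi> = sets (PiM {..<d} (\<lambda>_. borel))"
    and AE: "AE \<theta> in \<pi>. \<forall>k<d. 0 \<le> \<theta> k \<and> \<theta> k \<le> h"
    and h: "0 < h" and T: "1 \<le> T" "2 * exp 2 * h \<le> T"
    and Q: "2 * real n * (2 * exp 2 * h / T) powr T \<le> 1"
  shows "moment_max d \<pi> n j \<beta> \<le> ennreal ((1 + fact \<beta> * exp 1) * (2 * (1 + exp 1) * T) ^ (d - 1 + \<beta>))"
proof -
  define a where "a k = (if k = j then \<beta> else 1)" for k
  define g where "g k t = (1 + real t) ^ (a k) * (if T \<le> real t then 1 else (0::real))" for k t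
  define C where "C = insert None (Some ` {..<n})"
  define w where "w k c xs = (case c of None \<Rightarrow> (T + 1) ^ (a k) | Some i \<Rightarrow> g k (xs i k))"
    for k and c :: "nat option" and xs :: "nat \<Rightarrow> nat \<Rightarrow> nat"
  define q where "q = 2 * exp 2 * h / T"
  define \<epsilon> where "\<epsilon> k = 2 * (fact (a k) * exp 1 * q powr T)" for k
  define PP where "PP = pois_mixture d \<pi>"
  define v where "v k c = (case c of None \<Rightarrow> (T + 1) ^ (a k) | Some i \<Rightarrow> \<epsilon> k)" for k and c :: "nat option"
  define F where "F = PiE {..<d} (\<lambda>_. C)"
  define \<alpha> where "\<alpha> f = (\<Prod>k<d. if f k = None then (T + 1) ^ (a k) else 1)" for f :: "nat \<Rightarrow> nat option"
  define u where "u f i k t = (if f k = Some i then g k t else 1)" for f :: "nat \<Rightarrow> nat option" and i k t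
  have g0: "0 \<le> g k t" for k t unfolding g_def by simp
  have u0: "0 \<le> u f i k t" for f i k t unfolding u_def using g0 by simp
  have \<epsilon>0: "0 \<le> \<epsilon> k" for k unfolding \<epsilon>_def by simp
  have T0: "0 \<le> T" using T by simp
  have \<alpha>0: "0 \<le> \<alpha> f" for f unfolding \<alpha>_def using T0 by (simp add: prod_nonneg)
  have finF: "finite F" unfolding F_def C_def by (simp add: finite_PiE)

  have step1: "(1 + real (Xmax n xs j)) ^ \<beta> * (\<Prod>k\<in>{..<d} - {j}. 1 + real (Xmax n xs k))
      \<le> (\<Prod>k<d. \<Sum>c\<in>C. w k c xs)" for xs
  proof -
    have e: "(1 + real (Xmax n xs j)) ^ \<beta> * (\<Prod>k\<in>{..<d} - {j}. 1 + real (Xmax n xs k))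
        = (\<Prod>k<d. (1 + real (Xmax n xs k)) ^ (a k))"
    proof -
      have "(\<Prod>k<d. (1 + real (Xmax n xs k)) ^ (a k)) =
          (1 + real (Xmax n xs j)) ^ (a j) * (\<Prod>k\<in>{..<d} - {j}. (1 + real (Xmax n xs k)) ^ (a k))"
        using j by (subst prod.remove[of _ j]) auto
      also have "(\<Prod>k\<in>{..<d} - {j}. (1 + real (Xmax n xs k)) ^ (a k)) = (\<Prod>k\<in>{..<d} - {j}. 1 + real (Xmax n xs k))"
        by (rule prod.cong) (auto simp: a_def)
      finally show ?thesis by (simp add: a_def)
    qed
    have per: "(1 + real (Xmax n xs k)) ^ (a k) \<le> (\<Sum>c\<in>C. w k c xs)" for k
    proof -
      have ne: "(\<lambda>i. xs i k) ` {..<n} \<noteq> {}" using n by (auto simp: lessThan_empty_iff)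
      obtain i0 where i0: "i0 < n" "Xmax n xs k = xs i0 k"
        using Max_in[OF finite_imageI ne] unfolding Xmax_def by auto
      have sC: "(\<Sum>c\<in>C. w k c xs) = (T + 1) ^ (a k) + (\<Sum>i<n. g k (xs i k))"
        unfolding C_def by (simp add: sum_opt w_def)
      show ?thesis
      proof (cases "T \<le> real (xs i0 k)")
        case True
        have "(1 + real (Xmax n xs k)) ^ (a k) = g k (xs i0 k)" using True i0 by (simp add: g_def)
        also have "\<dots> \<le> (\<Sum>i<n. g k (xs i k))" by (rule member_le_sum) (use i0 g0 in auto)
        also have "\<dots> \<le> (T + 1) ^ (a k) + (\<Sum>i<n. g k (xs i k))" using T0 by simp
        finally show ?thesis using sC by simp
      next
        case False
        have "(1 + real (Xmax n xs k)) ^ (a k) \<le> (T + 1) ^ (a k)" using False i0 by (intro power_mono) auto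
        also have "\<dots> \<le> (T + 1) ^ (a k) + (\<Sum>i<n. g k (xs i k))" by (simp add: sum_nonneg g0)
        finally show ?thesis using sC by simp
      qed
    qed
    show ?thesis unfolding e by (rule prod_mono) (use per in auto)
  qed

  have step23: "(\<Prod>k<d. \<Sum>c\<in>C. w k c xs) = (\<Sum>f\<in>F. \<alpha> f * (\<Prod>i<n. \<Prod>k<d. u f i k (xs i k)))" for xs
  proof -
    have "(\<Prod>k<d. \<Sum>c\<in>C. w k c xs) = (\<Sum>f\<in>F. \<Prod>k<d. w k (f k) xs)"
      unfolding F_def by (rule prod_sum_PiE) (auto simp: C_def)
    also have "\<dots> = (\<Sum>f\<in>F. \<alpha> f * (\<Prod>i<n. \<Prod>k<d. u f i k (xs i k)))"
    proof (rule sum.cong[OF refl])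
      fix f assume f: "f \<in> F"
      have "(\<Prod>i<n. \<Prod>k<d. u f i k (xs i k)) = (\<Prod>k<d. case f k of None \<Rightarrow> 1 | Some i \<Rightarrow> g k (xs i k))"
        unfolding u_def by (rule swap_opt[where z = "\<lambda>k i. g k (xs i k)"]) (use f in \<open>simp add: F_def C_def\<close>)
      moreover have "(\<Prod>k<d. w k (f k) xs) = \<alpha> f * (\<Prod>k<d. case f k of None \<Rightarrow> 1 | Some i \<Rightarrow> g k (xs i k))"
        unfolding \<alpha>_def prod.distrib[symmetric] by (rule prod.cong) (auto simp: w_def split: option.split)
      ultimately show "(\<Prod>k<d. w k (f k) xs) = \<alpha> f * (\<Prod>i<n. \<Prod>k<d. u f i k (xs i k))" by simp
    qed
    finally show ?thesis .
  qed

  have pos: "AE \<theta> in \<pi>. \<forall>k<d. 0 \<le> \<theta> k" using AE by eventually_elim auto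
  have PP_prob: "prob_space PP" unfolding PP_def by (rule P_prob[OF S P pos])
  interpret PS: product_sigma_finite "\<lambda>_::nat. PP"
    by (simp add: product_sigma_finite_def prob_space_imp_sigma_finite[OF PP_prob])
  have measU: "(\<lambda>x. \<Prod>k<d. ennreal (u f i k (x k))) \<in> borel_measurable PP" for f i
    by (subst measurable_cong_sets[of PP "NN d"]) (auto simp: PP_def pois_mixture_def intro: meas_U)

  have row: "(\<integral>\<^sup>+x. (\<Prod>k<d. ennreal (u f i k (x k))) \<partial>PP) \<le> ennreal (\<Prod>k<d. if f k = Some i then \<epsilon> k else 1)" for f i
  proof -
    have "(\<integral>\<^sup>+x. (\<Prod>k<d. ennreal (u f i k (x k))) \<partial>PP)
       = (\<integral>\<^sup>+\<theta>. (\<Prod>k<d. \<integral>\<^sup>+t. ennreal (poi_pmf (\<theta> k) t * u f i k t) \<partial>count_space UNIV) \<partial>\<pi>)"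
      unfolding PP_def by (rule L1[OF S P u0 pos])
    also have "\<dots> \<le> (\<integral>\<^sup>+\<theta>. ennreal (\<Prod>k<d. if f k = Some i then \<epsilon> k else 1) \<partial>\<pi>)"
    proof (rule nn_integral_mono_AE)
      show "AE \<theta> in \<pi>. (\<Prod>k<d. \<integral>\<^sup>+t. ennreal (poi_pmf (\<theta> k) t * u f i k t) \<partial>count_space UNIV)
          \<le> ennreal (\<Prod>k<d. if f k = Some i then \<epsilon> k else 1)"
        using AE
      proof eventually_elim
        case (elim \<theta>)
        have "(\<Prod>k<d. \<integral>\<^sup>+t. ennreal (poi_pmf (\<theta> k) t * u f i k t) \<partial>count_space UNIV)
            \<le> (\<Prod>k<d. ennreal (if f k = Some i then \<epsilon> k else 1))"
        proof (rule prod_mono_ennreal)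
          fix k assume k: "k \<in> {..<d}"
          show "(\<integral>\<^sup>+t. ennreal (poi_pmf (\<theta> k) t * u f i k t) \<partial>count_space UNIV)
            \<le> ennreal (if f k = Some i then \<epsilon> k else 1)"
          proof (cases "f k = Some i")
            case True
            then show ?thesis
              using Lg[of "\<theta> k" h T "a k"] elim k h T
              by (simp add: u_def g_def \<epsilon>_def q_def)
          next
            case False
            then show ?thesis using Lu[of "\<theta> k"] elim k by (simp add: u_def)
          qed
        qed
        also have "\<dots> = ennreal (\<Prod>k<d. if f k = Some i then \<epsilon> k else 1)"
          by (rule prod_ennreal) (simp add: \<epsilon>0)
        finally show ?case .
      qed
    qed
    also have "\<dots> = ennreal (\<Prod>k<d. if f k = Some i then \<epsilon> k else 1)"
      by (simp add: nn_integral_const prob_space.emeasure_space_1[OF P])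
    finally show ?thesis .
  qed
  define M where "M = PiM {..<n} (\<lambda>_. PP)"
  have measT0: "(\<lambda>xs. (\<Prod>i<n. \<Prod>k<d. ennreal (u f i k (xs i k)))) \<in> borel_measurable M" for f
  proof -
    have "(\<lambda>xs. \<Prod>i<n. (\<lambda>x. \<Prod>k<d. ennreal (u f i k (x k))) (xs i)) \<in> borel_measurable M"
      unfolding M_def
    proof (rule borel_measurable_prod_ennreal)
      fix i assume "i \<in> {..<n}"
      show "(\<lambda>xs. (\<lambda>x. \<Prod>k<d. ennreal (u f i k (x k))) (xs i)) \<in> borel_measurable (PiM {..<n} (\<lambda>_. PP))"
        using measurable_compose[OF measurable_component_singleton[OF \<open>i \<in> {..<n}\<close>, of "\<lambda>_. PP"] measU[of f i]]
        by simp
    qed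
    then show ?thesis by simp
  qed
  have measT: "(\<lambda>xs. ennreal (\<alpha> f) * (\<Prod>i<n. \<Prod>k<d. ennreal (u f i k (xs i k)))) \<in> borel_measurable M" for f
    using measT0[of f] by measurable
  have "moment_max d \<pi> n j \<beta> = (\<integral>\<^sup>+xs. ennreal ((1 + real (Xmax n xs j)) ^ \<beta> *
       (\<Prod>k\<in>{..<d} - {j}. 1 + real (Xmax n xs k))) \<partial>M)"
    by (simp add: moment_max_def M_def PP_def)
  also have "\<dots> \<le> (\<integral>\<^sup>+xs. ennreal (\<Sum>f\<in>F. \<alpha> f * (\<Prod>i<n. \<Prod>k<d. u f i k (xs i k))) \<partial>M)"
    by (intro nn_integral_mono ennreal_leI) (use step1 step23 in auto)
  also have "\<dots> = (\<integral>\<^sup>+xs. (\<Sum>f\<in>F. ennreal (\<alpha> f) * (\<Prod>i<n. \<Prod>k<d. ennreal (u f i k (xs i k)))) \<partial>M)"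
  proof (rule nn_integral_cong)
    fix xs :: "nat \<Rightarrow> nat \<Rightarrow> nat"
    have "ennreal (\<Sum>f\<in>F. \<alpha> f * (\<Prod>i<n. \<Prod>k<d. u f i k (xs i k)))
       = (\<Sum>f\<in>F. ennreal (\<alpha> f * (\<Prod>i<n. \<Prod>k<d. u f i k (xs i k))))"
      by (rule sum_ennreal[symmetric]) (simp add: \<alpha>0 u0 prod_nonneg)
    also have "\<dots> = (\<Sum>f\<in>F. ennreal (\<alpha> f) * (\<Prod>i<n. \<Prod>k<d. ennreal (u f i k (xs i k))))"
      by (rule sum.cong[OF refl]) (simp add: ennreal_mult \<alpha>0 u0 prod_nonneg prod_ennreal)
    finally show "ennreal (\<Sum>f\<in>F. \<alpha> f * (\<Prod>i<n. \<Prod>k<d. u f i k (xs i k)))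
       = (\<Sum>f\<in>F. ennreal (\<alpha> f) * (\<Prod>i<n. \<Prod>k<d. ennreal (u f i k (xs i k))))" .
  qed
  also have "\<dots> = (\<Sum>f\<in>F. ennreal (\<alpha> f) * (\<Prod>i<n. \<integral>\<^sup>+x. (\<Prod>k<d. ennreal (u f i k (x k))) \<partial>PP))"
  proof -
    have "(\<integral>\<^sup>+xs. (\<Sum>f\<in>F. ennreal (\<alpha> f) * (\<Prod>i<n. \<Prod>k<d. ennreal (u f i k (xs i k)))) \<partial>M)
       = (\<Sum>f\<in>F. \<integral>\<^sup>+xs. ennreal (\<alpha> f) * (\<Prod>i<n. \<Prod>k<d. ennreal (u f i k (xs i k))) \<partial>M)"
      by (rule nn_integral_sum) (rule measT)
    also have "\<dots> = (\<Sum>f\<in>F. ennreal (\<alpha> f) * (\<Prod>i<n. \<integral>\<^sup>+x. (\<Prod>k<d. ennreal (u f i k (x k))) \<partial>PP))"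
    proof (rule sum.cong[OF refl])
      fix f
      have "(\<integral>\<^sup>+xs. (\<Prod>i<n. (\<lambda>x. \<Prod>k<d. ennreal (u f i k (x k))) (xs i)) \<partial>M)
          = (\<Prod>i<n. \<integral>\<^sup>+x. (\<Prod>k<d. ennreal (u f i k (x k))) \<partial>PP)"
        unfolding M_def by (rule PS.product_nn_integral_prod) (auto intro: measU)
      then show "(\<integral>\<^sup>+xs. ennreal (\<alpha> f) * (\<Prod>i<n. \<Prod>k<d. ennreal (u f i k (xs i k))) \<partial>M)
          = ennreal (\<alpha> f) * (\<Prod>i<n. \<integral>\<^sup>+x. (\<Prod>k<d. ennreal (u f i k (x k))) \<partial>PP)"
        by (subst nn_integral_cmult[OF measT0]) simp
    qed
    finally show ?thesis .
  qed
  also have "\<dots> \<le> (\<Sum>f\<in>F. ennreal (\<alpha> f) * (\<Prod>i<n. ennreal (\<Prod>k<d. if f k = Some i then \<epsilon> k else 1)))"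
    by (intro sum_mono mult_left_mono prod_mono_ennreal row) auto
  also have "\<dots> = ennreal (\<Sum>f\<in>F. \<Prod>k<d. v k (f k))"
  proof -
    have "ennreal (\<alpha> f) * (\<Prod>i<n. ennreal (\<Prod>k<d. if f k = Some i then \<epsilon> k else 1))
        = ennreal (\<Prod>k<d. v k (f k))" if f: "f \<in> F" for f
    proof -
      have "ennreal (\<alpha> f) * (\<Prod>i<n. ennreal (\<Prod>k<d. if f k = Some i then \<epsilon> k else 1))
          = ennreal (\<alpha> f * (\<Prod>i<n. \<Prod>k<d. if f k = Some i then \<epsilon> k else 1))"
        by (simp add: ennreal_mult \<alpha>0 \<epsilon>0 prod_nonneg prod_ennreal)
      also have "(\<Prod>i<n. \<Prod>k<d. if f k = Some i then \<epsilon> k else 1) = (\<Prod>k<d. case f k of None \<Rightarrow> 1 | Some i \<Rightarrow> \<epsilon> k)"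
        by (rule swap_opt[where z = "\<lambda>k i. \<epsilon> k"]) (use f in \<open>simp add: F_def C_def\<close>)
      also have "\<alpha> f * (\<Prod>k<d. case f k of None \<Rightarrow> 1 | Some i \<Rightarrow> \<epsilon> k) = (\<Prod>k<d. v k (f k))"
        unfolding \<alpha>_def prod.distrib[symmetric] by (rule prod.cong) (auto simp: v_def split: option.split)
      finally show ?thesis .
    qed
    then have "(\<Sum>f\<in>F. ennreal (\<alpha> f) * (\<Prod>i<n. ennreal (\<Prod>k<d. if f k = Some i then \<epsilon> k else 1)))
        = (\<Sum>f\<in>F. ennreal (\<Prod>k<d. v k (f k)))" by (rule sum.cong[OF refl])
    also have "\<dots> = ennreal (\<Sum>f\<in>F. \<Prod>k<d. v k (f k))"
      by (rule sum_ennreal) (auto simp: v_def \<epsilon>0 T0 prod_nonneg split: option.split)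
    finally show ?thesis .
  qed
  also have "(\<Sum>f\<in>F. \<Prod>k<d. v k (f k)) = (\<Prod>k<d. \<Sum>c\<in>C. v k c)"
    unfolding F_def by (rule prod_sum_PiE[symmetric]) (auto simp: C_def)
  also have "\<dots> = (\<Prod>k<d. (T + 1) ^ (a k) + real n * \<epsilon> k)"
    unfolding C_def by (simp add: sum_opt v_def)
  also have "\<dots> \<le> (1 + fact \<beta> * exp 1) * (2 * (1 + exp 1) * T) ^ (d - 1 + \<beta>)"
  proof -
    have fk: "(T + 1) ^ (a k) + real n * \<epsilon> k \<le> (1 + fact (a k) * exp 1) * (2 * T) ^ (a k)" for k
    proof -
      have "real n * \<epsilon> k = fact (a k) * exp 1 * (2 * real n * q powr T)"
        by (simp add: \<epsilon>_def)
      also have "\<dots> \<le> fact (a k) * exp 1 * 1"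
        using Q by (intro mult_left_mono) (auto simp: q_def)
      finally have A: "real n * \<epsilon> k \<le> fact (a k) * exp 1" by simp
      have B: "(T + 1) ^ (a k) \<le> (2 * T) ^ (a k)" using T by (intro power_mono) auto
      have C1: "1 \<le> (2 * T) ^ (a k)" using T by (intro one_le_power) auto
      have "fact (a k) * exp 1 \<le> fact (a k) * exp 1 * (2 * T) ^ (a k)"
        using C1 mult_left_mono[OF C1, of "fact (a k) * exp 1"] by simp
      moreover have "(1 + fact (a k) * exp 1) * (2 * T) ^ (a k) = (2 * T) ^ (a k) + fact (a k) * exp 1 * (2 * T) ^ (a k)"
        by (simp add: distrib_right)
      ultimately show ?thesis using A B by linarith
    qed
    have "(\<Prod>k<d. (T + 1) ^ (a k) + real n * \<epsilon> k) \<le> (\<Prod>k<d. (1 + fact (a k) * exp 1) * (2 * T) ^ (a k))"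
      by (rule prod_mono) (use fk T0 \<epsilon>0 in \<open>auto intro: add_nonneg_nonneg\<close>)
    also have "\<dots> = ((1 + fact \<beta> * exp 1) * (2 * T) ^ \<beta>) * (\<Prod>k\<in>{..<d} - {j}. (1 + exp 1) * (2 * T))"
    proof -
      have "(\<Prod>k<d. (1 + fact (a k) * exp 1) * (2 * T) ^ (a k)) =
         ((1 + fact (a j) * exp 1) * (2 * T) ^ (a j)) * (\<Prod>k\<in>{..<d} - {j}. (1 + fact (a k) * exp 1) * (2 * T) ^ (a k))"
        using j by (subst prod.remove[of _ j]) auto
      also have "(\<Prod>k\<in>{..<d} - {j}. (1 + fact (a k) * exp 1) * (2 * T) ^ (a k)) = (\<Prod>k\<in>{..<d} - {j}. (1 + exp 1) * (2 * T))"
        by (rule prod.cong) (auto simp: a_def)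
      finally show ?thesis by (simp add: a_def)
    qed
    also have "(\<Prod>k\<in>{..<d} - {j}. (1 + exp 1) * (2 * T)) = ((1 + exp 1) * (2 * T)) ^ (d - 1)"
      using j by simp
    also have "(1 + fact \<beta> * exp 1) * (2 * T) ^ \<beta> * ((1 + exp 1) * (2 * T)) ^ (d - 1)
        \<le> (1 + fact \<beta> * exp 1) * ((1 + exp 1) * (2 * T)) ^ \<beta> * ((1 + exp 1) * (2 * T)) ^ (d - 1)"
    proof -
      have "2 * T \<le> (1 + exp 1) * (2 * T)" using T0 by (simp add: distrib_right)
      then show ?thesis using T0 by (intro mult_right_mono mult_left_mono power_mono) auto
    qed
    also have "\<dots> = (1 + fact \<beta> * exp 1) * (2 * (1 + exp 1) * T) ^ (d - 1 + \<beta>)"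
      by (simp add: power_add mult_ac)
    finally show ?thesis .
  qed
  finally show ?thesis by (simp add: ennreal_leI)
qed



lemma ln_gt1: "3 \<le> n \<Longrightarrow> 1 < ln (real n)"
proof -
  assume n: "3 \<le> n"
  have "exp 1 < real n" using e_less_272 n by simp
  then have "ln (exp 1) < ln (real n)" using n by (subst ln_less_cancel_iff) auto
  then show ?thesis by simp
qed

lemma case1_conds:
  fixes h :: real and n :: nat
  assumes n: "3 \<le> n" and h: "0 < h"
  defines "L \<equiv> ln (real n) / ln (ln (real n))"
  defines "T \<equiv> max 4 (2 * exp 3 * h) * L"
  shows "1 \<le> T \<and> 2 * exp 2 * h \<le> T \<and> 2 * real n * (2 * exp 2 * h / T) powr T \<le> 1"
proof -
  define x where "x = ln (real n)"
  define y where "y = ln x"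
  have x1: "1 < x" unfolding x_def using ln_gt1[OF n] .
  have y0: "0 < y" unfolding y_def using x1 by simp
  have yx: "y \<le> x - 1" unfolding y_def using ln_le_minus_one[of x] x1 by simp
  have L: "L = x / y" unfolding L_def x_def y_def ..
  have L1: "1 \<le> L" unfolding L using y0 yx by simp
  have T4: "4 * L \<le> T" unfolding T_def using L1 by (intro mult_right_mono) auto
  have T1: "1 \<le> T" using T4 L1 by linarith
  have Th: "2 * exp 3 * h * L \<le> T" unfolding T_def using L1 by (intro mult_right_mono) auto
  have e23: "exp 2 \<le> exp (3::real)" by simp
  have "2 * exp 2 * h * 1 \<le> 2 * exp 3 * h * L"
    using e23 L1 h by (intro mult_mono) auto
  then have T2: "2 * exp 2 * h \<le> T" using Th by simp
  define r where "r = 2 * exp 2 * h / T"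
  define b where "b = 1 / (exp 1 * L)"
  have r0: "0 \<le> r" unfolding r_def using h T1 by simp
  have rb: "r \<le> b"
  proof -
    have "r \<le> 2 * exp 2 * h / (2 * exp 3 * h * L)"
      unfolding r_def using h L1 Th T1 by (intro divide_left_mono) (auto intro!: mult_pos_pos)
    also have "\<dots> = b" unfolding b_def using h L1
      by (simp add: field_simps exp_add[of 1 2, simplified, symmetric])
    finally show ?thesis .
  qed
  have b0: "0 < b" unfolding b_def using L1 by simp
  have b1: "b \<le> 1" unfolding b_def using L1
    by (simp add: field_simps) (metis mult_mono one_le_exp_iff order.refl zero_le_one one_le_numeral mult_1_left L1 dual_order.trans exp_ge_zero)
  have "r powr T \<le> b powr T" using r0 rb T1 by (intro powr_mono2) auto
  also have "\<dots> \<le> b powr (4 * L)" using T4 b0 b1 by (intro powr_mono') auto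
  also have "b powr (4 * L) = exp (- (4 * L * (1 + ln L)))"
    using b0 L1 by (simp add: powr_def b_def ln_div ln_mult algebra_simps)
  also have "\<dots> \<le> exp (- (2 * x))"
  proof -
    have lnL: "ln L = y - ln y" unfolding L y_def using x1 y0 by (simp add: ln_div)
    have "ln (y / 2) \<le> y / 2 - 1" using ln_le_minus_one[of "y/2"] y0 by simp
    then have "ln y - ln 2 \<le> y / 2 - 1" using y0 by (simp add: ln_div)
    then have "y / 2 \<le> 1 + y - ln y" using ln_2_less_1 by linarith
    then have "x / y * (y / 2) \<le> x / y * (1 + y - ln y)"
      using x1 y0 by (intro mult_left_mono) auto
    moreover have "L * (1 + ln L) = x / y * (1 + y - ln y)"
    proof -
      have "ln (x / y) = ln x - ln y" using x1 y0 by (simp add: ln_div)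
      then have "ln (x / y) = y - ln y" unfolding y_def by simp
      then show ?thesis unfolding L by simp
    qed
    moreover have "x / y * (y / 2) = x / 2" using y0 by simp
    ultimately have "x / 2 \<le> L * (1 + ln L)" by linarith
    moreover have "4 * L * (1 + ln L) = 4 * (L * (1 + ln L))" by (simp only: mult.assoc)
    ultimately have "- (4 * L * (1 + ln L)) \<le> - (2 * x)" by linarith
    then show ?thesis by (simp only: exp_le_cancel_iff)
  qed
  also have "exp (- (2 * x)) = 1 / (real n)^2"
  proof -
    have ex: "exp x = real n" unfolding x_def using n by simp
    have "exp (2 * x) = exp x * exp x" by (simp only: mult_2 exp_add)
    then have "exp (2 * x) = (real n)^2" using ex by (simp add: power2_eq_square)
    then show ?thesis by (simp add: exp_minus inverse_eq_divide)
  qed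
  finally have "r powr T \<le> 1 / (real n)^2" .
  then have "2 * real n * r powr T \<le> 2 * real n * (1 / (real n)^2)"
    by (intro mult_left_mono) auto
  also have "\<dots> \<le> 1" using n by (simp add: power2_eq_square field_simps)
  finally show ?thesis using T1 T2 unfolding r_def by simp
qed

lemma case2_conds:
  fixes s :: real and n :: nat
  assumes n: "3 \<le> n" and s: "0 < s"
  defines "T \<equiv> max 2 (2 * exp 3 * s) * ln (real n)"
  shows "1 \<le> T \<and> 2 * exp 2 * (s * ln (real n)) \<le> T \<and>
    2 * real n * (2 * exp 2 * (s * ln (real n)) / T) powr T \<le> 1"
proof -
  define x where "x = ln (real n)"
  have x1: "1 < x" unfolding x_def using ln_gt1[OF n] .
  have T2: "2 * x \<le> T" unfolding T_def x_def[symmetric] using x1 by (intro mult_right_mono) auto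
  have T1: "1 \<le> T" using T2 x1 by linarith
  have Th: "2 * exp 3 * s * x \<le> T" unfolding T_def x_def[symmetric] using x1 by (intro mult_right_mono) auto
  have e23: "exp 2 \<le> exp (3::real)" by simp
  have "2 * exp 2 * (s * x) \<le> 2 * exp 3 * s * x"
    using e23 s x1 by (simp add: mult_right_mono)
  then have Tc: "2 * exp 2 * (s * x) \<le> T" using Th by simp
  define r where "r = 2 * exp 2 * (s * x) / T"
  define b where "b = 1 / exp (1::real)"
  have r0: "0 \<le> r" unfolding r_def using s x1 T1 by simp
  have rb: "r \<le> b"
  proof -
    have "r \<le> 2 * exp 2 * (s * x) / (2 * exp 3 * s * x)"
      unfolding r_def using s x1 Th T1 by (intro divide_left_mono) (auto intro!: mult_pos_pos)
    also have "\<dots> = b" unfolding b_def using s x1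
      by (simp add: field_simps exp_add[of 1 2, simplified, symmetric])
    finally show ?thesis .
  qed
  have b0: "0 < b" unfolding b_def by simp
  have b1: "b \<le> 1" unfolding b_def by simp
  have "r powr T \<le> b powr T" using r0 rb T1 by (intro powr_mono2) auto
  also have "\<dots> \<le> b powr (2 * x)" using T2 b0 b1 by (intro powr_mono') auto
  also have "b powr (2 * x) = exp (- (2 * x))"
    using b0 by (simp add: powr_def b_def ln_div)
  also have "exp (- (2 * x)) = 1 / (real n)^2"
  proof -
    have ex: "exp x = real n" unfolding x_def using n by simp
    have "exp (2 * x) = exp x * exp x" by (simp only: mult_2 exp_add)
    then have "exp (2 * x) = (real n)^2" using ex by (simp add: power2_eq_square)
    then show ?thesis by (simp add: exp_minus inverse_eq_divide)
  qed
  finally have "r powr T \<le> 1 / (real n)^2" .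
  then have "2 * real n * r powr T \<le> 2 * real n * (1 / (real n)^2)"
    by (intro mult_left_mono) auto
  also have "\<dots> \<le> 1" using n by (simp add: power2_eq_square field_simps)
  finally show ?thesis using T1 Tc unfolding r_def x_def by simp
qed


theorem lemma8:
  shows "\<exists>c :: nat \<Rightarrow> real. (\<forall>\<beta>. c \<beta> > 0) \<and>
    (\<exists>c1 c2 c3 c4 :: real. c1 > 0 \<and> c2 > 0 \<and> c3 > 0 \<and> c4 > 0 \<and>
      (\<forall>(d::nat) (n::nat) (j::nat) (\<beta>::nat) (\<pi>::(nat \<Rightarrow> real) measure).
         d \<ge> 1 \<longrightarrow> n \<ge> 3 \<longrightarrow> j < d \<longrightarrow>
         prob_space \<pi> \<longrightarrow> sets \<pi> = sets (PiM {..<d} (\<lambda>_. borel)) \<longrightarrow>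
         (\<forall>h::real. h > 0 \<longrightarrow>
            (AE \<theta> in \<pi>. \<forall>k<d. 0 \<le> \<theta> k \<and> \<theta> k \<le> h) \<longrightarrow>
            moment_max d \<pi> n j \<beta> \<le>
              ennreal (c \<beta> * (max c1 (c2 * h) * ln (real n) / ln (ln (real n))) ^ (d - 1 + \<beta>))) \<and>
         (\<forall>s::real. s > 0 \<longrightarrow>
            (AE \<theta> in \<pi>. \<forall>k<d. 0 \<le> \<theta> k \<and> \<theta> k \<le> s * ln (real n)) \<longrightarrow>
            moment_max d \<pi> n j \<beta> \<le>
              ennreal (c \<beta> * (max c3 (c4 * s) * ln (real n)) ^ (d - 1 + \<beta>)))))"
proof -
  define cc where "cc = (\<lambda>\<beta>::nat. 1 + fact \<beta> * exp (1::real))"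
  define E where "E = 1 + exp (1::real)"
  define c1 where "c1 = 2 * E * 4"
  define c2 where "c2 = 2 * E * (2 * exp 3)"
  define c3 where "c3 = 2 * E * 2"
  define c4 where "c4 = 2 * E * (2 * exp 3)"
  have E0: "0 < E" unfolding E_def by (simp add: add_pos_nonneg)
  have pos: "\<forall>\<beta>. cc \<beta> > 0" unfolding cc_def by (simp add: add_pos_nonneg)
  have cpos: "c1 > 0 \<and> c2 > 0 \<and> c3 > 0 \<and> c4 > 0" unfolding c1_def c2_def c3_def c4_def using E0 by simp
  have main: "\<forall>(d::nat) (n::nat) (j::nat) (\<beta>::nat) (\<pi>::(nat \<Rightarrow> real) measure).
         d \<ge> 1 \<longrightarrow> n \<ge> 3 \<longrightarrow> j < d \<longrightarrow>
         prob_space \<pi> \<longrightarrow> sets \<pi> = sets (PiM {..<d} (\<lambda>_. borel)) \<longrightarrow>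
         (\<forall>h::real. h > 0 \<longrightarrow>
            (AE \<theta> in \<pi>. \<forall>k<d. 0 \<le> \<theta> k \<and> \<theta> k \<le> h) \<longrightarrow>
            moment_max d \<pi> n j \<beta> \<le>
              ennreal (cc \<beta> * (max c1 (c2 * h) * ln (real n) / ln (ln (real n))) ^ (d - 1 + \<beta>))) \<and>
         (\<forall>s::real. s > 0 \<longrightarrow>
            (AE \<theta> in \<pi>. \<forall>k<d. 0 \<le> \<theta> k \<and> \<theta> k \<le> s * ln (real n)) \<longrightarrow>
            moment_max d \<pi> n j \<beta> \<le>
              ennreal (cc \<beta> * (max c3 (c4 * s) * ln (real n)) ^ (d - 1 + \<beta>)))"
  proof (intro allI impI conjI)
    fix d n j \<beta> :: nat and \<pi> :: "(nat \<Rightarrow> real) measure" and h :: real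
    assume d: "1 \<le> d" and n: "3 \<le> n" and j: "j < d" and P: "prob_space \<pi>"
      and S: "sets \<pi> = sets (PiM {..<d} (\<lambda>_. borel))" and h: "0 < h"
      and AE: "AE \<theta> in \<pi>. \<forall>k<d. 0 \<le> \<theta> k \<and> \<theta> k \<le> h"
    define T where "T = max 4 (2 * exp 3 * h) * (ln (real n) / ln (ln (real n)))"
    have C: "1 \<le> T \<and> 2 * exp 2 * h \<le> T \<and> 2 * real n * (2 * exp 2 * h / T) powr T \<le> 1"
      using case1_conds[OF n h] unfolding T_def .
    have n1: "1 \<le> n" using n by simp
    have G: "moment_max d \<pi> n j \<beta> \<le> ennreal ((1 + fact \<beta> * exp 1) * (2 * (1 + exp 1) * T) ^ (d - 1 + \<beta>))"
      using GEN[OF d n1 j P S AE h] C by blast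
    have eq: "2 * (1 + exp 1) * T = max c1 (c2 * h) * ln (real n) / ln (ln (real n))"
    proof -
      have "max c1 (c2 * h) = 2 * E * max 4 (2 * exp 3 * h)"
        unfolding c1_def c2_def using E0 by (simp add: max_mult_distrib_left mult.assoc)
      then show ?thesis unfolding T_def E_def by simp
    qed
    show "moment_max d \<pi> n j \<beta> \<le> ennreal (cc \<beta> * (max c1 (c2 * h) * ln (real n) / ln (ln (real n))) ^ (d - 1 + \<beta>))"
      using G unfolding eq cc_def .
  next
    fix d n j \<beta> :: nat and \<pi> :: "(nat \<Rightarrow> real) measure" and s :: real
    assume d: "1 \<le> d" and n: "3 \<le> n" and j: "j < d" and P: "prob_space \<pi>"
      and S: "sets \<pi> = sets (PiM {..<d} (\<lambda>_. borel))" and s: "0 < s"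
      and AE: "AE \<theta> in \<pi>. \<forall>k<d. 0 \<le> \<theta> k \<and> \<theta> k \<le> s * ln (real n)"
    define T where "T = max 2 (2 * exp 3 * s) * ln (real n)"
    have C: "1 \<le> T \<and> 2 * exp 2 * (s * ln (real n)) \<le> T \<and>
        2 * real n * (2 * exp 2 * (s * ln (real n)) / T) powr T \<le> 1"
      using case2_conds[OF n s] unfolding T_def .
    have n1: "1 \<le> n" using n by simp
    have hp: "0 < s * ln (real n)" using s ln_gt1[OF n] by simp
    have G: "moment_max d \<pi> n j \<beta> \<le> ennreal ((1 + fact \<beta> * exp 1) * (2 * (1 + exp 1) * T) ^ (d - 1 + \<beta>))"
      using GEN[OF d n1 j P S AE hp] C by blast
    have eq: "2 * (1 + exp 1) * T = max c3 (c4 * s) * ln (real n)"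
    proof -
      have "max c3 (c4 * s) = 2 * E * max 2 (2 * exp 3 * s)"
        unfolding c3_def c4_def using E0 by (simp add: max_mult_distrib_left mult.assoc)
      then show ?thesis unfolding T_def E_def by simp
    qed
    show "moment_max d \<pi> n j \<beta> \<le> ennreal (cc \<beta> * (max c3 (c4 * s) * ln (real n)) ^ (d - 1 + \<beta>))"
      using G unfolding eq cc_def .
  qed
  show ?thesis
    apply (rule exI[of _ cc])
    apply (rule conjI[OF pos])
    apply (rule exI[of _ c1], rule exI[of _ c2], rule exI[of _ c3], rule exI[of _ c4])
    using cpos main by blast
qed

end
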